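(* If $\mathcal{R}_0<1$, then the disease-free equilibrium $E_0=\left(\frac{\Lambda}{\lambda},\frac{r\Lambda}{\mu\lambda},0,0\right)$ of the model is globally asymptotically stable.
   Context: The model is $\dot S=\Lambda-F_1(S,I_1)-F_2(S,I_2)-\lambda S$, $\dot V_1=rS-(\mu+kI_2)V_1$, $\dot I_1=F_1(S,I_1)-\alpha_1I_1$, $\dot I_2=F_2(S,I_2)+kI_2V_1-\alpha_2I_2$ on $\mathbb{R}^4_+$. The constants $\Lambda,\mu,r,k,\gamma_1,\gamma_2>0$ and $v_1,v_2\ge0$; $\lambda=r+\mu$ and $\alpha_i=\gamma_i+v_i+\mu$. For $i=1,2$ the incidence functions satisfy: - (H1) $F_i(S,I_i)=I_if_i(S,I_i)$ with $F_i,f_i\in C^2(\mathbb{R}^2_+,\mathbb{R}_+)$ and $F_i(0,I_i)=F_i(S,0)=0$; - (H2) $\partial f_i/\partial S>0$ and $\partial f_i/\partial I_i\le0$; - (H3) $\lim_{I_i\to0^+}F_i(S,I_i)/I_i$ exists and is positive for $S>0$. Let $S^0=\Lambda/\lambda$ and $\sigma_i=\frac{\partial F_i}{\partial I_i}(S^0,0)$. Set $\mathcal{R}_1=\sigma_1/\alpha_1$, $\mathcal{R}_2=\sigma_2/\alpha_2+\frac{kr\Lambda}{\alpha_2\mu\lambda}$ and $\mathcal{R}_0=\max\{\mathcal{R}_1,\mathcal{R}_2\}$. *)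

theory Defs
  imports "HOL-Analysis.Analysis"
begin

definition quad :: "(real \<times> real) set" where
  "quad = {p. fst p \<ge> 0 \<and> snd p \<ge> 0}"

text \<open>C^1 and C^2 on a set (derivatives taken within the set, so one-sided on the boundary).\<close>
definition C1_on :: "(real \<times> real) set \<Rightarrow> (real \<times> real \<Rightarrow> real) \<Rightarrow> bool" where
  "C1_on A g \<longleftrightarrow> (\<exists>g1 g2.
     (\<forall>p\<in>A. (g has_derivative (\<lambda>h. g1 p * fst h + g2 p * snd h)) (at p within A))
     \<and> continuous_on A g1 \<and> continuous_on A g2)"

definition C2_on :: "(real \<times> real) set \<Rightarrow> (real \<times> real \<Rightarrow> real) \<Rightarrow> bool" where
  "C2_on A g \<longleftrightarrow> (\<exists>g1 g2.
     (\<forall>p\<in>A. (g has_derivative (\<lambda>h. g1 p * fst h + g2 p * snd h)) (at p within A))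
     \<and> C1_on A g1 \<and> C1_on A g2)"

definition incidence_ok :: "(real \<Rightarrow> real \<Rightarrow> real) \<Rightarrow> (real \<Rightarrow> real \<Rightarrow> real) \<Rightarrow> bool" where
  "incidence_ok F f \<longleftrightarrow>
     \<comment> \<open>(H1)\<close>
     (\<forall>S\<ge>0. \<forall>I\<ge>0. F S I = I * f S I \<and> F S I \<ge> 0 \<and> f S I \<ge> 0)
     \<and> C2_on quad (\<lambda>p. F (fst p) (snd p)) \<and> C2_on quad (\<lambda>p. f (fst p) (snd p))
     \<and> (\<forall>I\<ge>0. F 0 I = 0) \<and> (\<forall>S\<ge>0. F S 0 = 0)
     \<comment> \<open>(H2)\<close>
     \<and> (\<forall>S\<ge>0. \<forall>I\<ge>0. \<exists>d>0. ((\<lambda>s. f s I) has_real_derivative d) (at S within {0..}))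
     \<and> (\<forall>S\<ge>0. \<forall>I\<ge>0. \<exists>d\<le>0. ((\<lambda>i. f S i) has_real_derivative d) (at I within {0..}))
     \<comment> \<open>(H3)\<close>
     \<and> (\<forall>S>0. \<exists>L>0. ((\<lambda>I. F S I / I) \<longlongrightarrow> L) (at_right 0))"

definition model_rhs ::
  "real \<Rightarrow> real \<Rightarrow> real \<Rightarrow> real \<Rightarrow> real \<Rightarrow> real \<Rightarrow>
   (real \<Rightarrow> real \<Rightarrow> real) \<Rightarrow> (real \<Rightarrow> real \<Rightarrow> real) \<Rightarrow>
   real \<times> real \<times> real \<times> real \<Rightarrow> real \<times> real \<times> real \<times> real" where
  "model_rhs Lam mu r k alpha1 alpha2 F1 F2 x =
     (case x of (S, V1, I1, I2) \<Rightarrow>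
       (Lam - F1 S I1 - F2 S I2 - (r + mu) * S,
        r * S - (mu + k * I2) * V1,
        F1 S I1 - alpha1 * I1,
        F2 S I2 + k * I2 * V1 - alpha2 * I2))"

definition nonneg4 :: "real \<times> real \<times> real \<times> real \<Rightarrow> bool" where
  "nonneg4 x = (case x of (a, b, c, d) \<Rightarrow> a \<ge> 0 \<and> b \<ge> 0 \<and> c \<ge> 0 \<and> d \<ge> 0)"

definition is_solution ::
  "(real \<times> real \<times> real \<times> real \<Rightarrow> real \<times> real \<times> real \<times> real) \<Rightarrow>
   (real \<Rightarrow> real \<times> real \<times> real \<times> real) \<Rightarrow> bool" where
  "is_solution g x \<longleftrightarrow>
     (\<forall>t\<ge>0. nonneg4 (x t) \<and> (x has_vector_derivative g (x t)) (at t within {0..}))"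

definition globally_asymptotically_stable ::
  "(real \<times> real \<times> real \<times> real \<Rightarrow> real \<times> real \<times> real \<times> real) \<Rightarrow>
   real \<times> real \<times> real \<times> real \<Rightarrow> bool" where
  "globally_asymptotically_stable g E \<longleftrightarrow>
     (\<forall>\<epsilon>>0. \<exists>\<delta>>0. \<forall>x. is_solution g x \<and> dist (x 0) E < \<delta> \<longrightarrow> (\<forall>t\<ge>0. dist (x t) E < \<epsilon>))
     \<and> (\<forall>x. is_solution g x \<longrightarrow> (x \<longlongrightarrow> E) at_top)"

end

theory Submission
  imports Defs
begin


lemma nonincr_within:
  fixes w :: "real \<Rightarrow> real"
  assumes d: "\<And>t. t \<ge> T \<Longrightarrow> \<exists>d. (w has_real_derivative d) (at t within {T..}) \<and> d \<le> 0"
    and "T \<le> s" "s \<le> t"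
  shows "w t \<le> w s"
proof (cases "s = t")
  case True then show ?thesis by simp
next
  case False
  hence st: "s < t" using assms by simp
  have cont: "continuous_on {s..t} w"
  proof -
    have "\<forall>y\<in>{s..t}. continuous (at y within {T..}) w"
      using d assms(2) by (meson DERIV_continuous atLeastAtMost_iff order_trans)
    hence "\<forall>y\<in>{s..t}. continuous (at y within {s..t}) w"
      using assms(2) by (metis atLeastAtMost_iff atLeast_iff continuous_within_subset order_trans subsetI)
    thus ?thesis using continuous_on_eq_continuous_within by blast
  qed
  have dat: "\<exists>d. DERIV w y :> d \<and> d \<le> 0" if yy: "s < y" "y < t" for y
  proof -
    obtain d where d1: "(w has_real_derivative d) (at y within {T..})" "d \<le> 0"
      using d[of y] yy assms(2) by force
    have "(w has_real_derivative d) (at y within {T<..})"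
      using d1(1) by (rule DERIV_subset) auto
    moreover have "at y within {T<..} = at y"
      using yy assms by (intro at_within_open) auto
    ultimately show ?thesis using d1 by auto
  qed
  obtain l z where lz: "s < z" "z < t" "DERIV w z :> l" "w t - w s = (t - s) * l"
    using MVT[OF st cont] dat by (meson real_differentiable_def)
  obtain d where "DERIV w z :> d" "d \<le> 0" using dat lz by blast
  hence "l \<le> 0" using lz DERIV_unique by blast
  hence "(t - s) * l \<le> 0" using st by (simp add: mult_nonneg_nonpos)
  thus ?thesis using lz by linarith
qed

lemma cmp_exp:
  fixes u u' :: "real \<Rightarrow> real"
  assumes T: "T \<ge> 0"
    and du: "\<And>t. t \<ge> T \<Longrightarrow> (u has_real_derivative u' t) (at t within {0..})"
    and le: "\<And>t. t \<ge> T \<Longrightarrow> u' t \<le> -a*(u t - c)"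
    and t: "t \<ge> T"
  shows "u t - c \<le> (u T - c) * exp (-a*(t - T))"
proof -
  define w where "w = (\<lambda>s. (u s - c) * exp (a * s))"
  have "w t \<le> w T"
  proof (rule nonincr_within[of T w])
    fix s assume s: "s \<ge> T"
    have "(u has_real_derivative u' s) (at s within {T..})"
      using du[OF s] by (rule DERIV_subset) (use T in auto)
    hence "(w has_real_derivative (u' s * exp (a * s) + (u s - c) * (exp (a * s) * a))) (at s within {T..})"
      unfolding w_def by (auto intro!: derivative_eq_intros)
    moreover have "u' s * exp (a * s) + (u s - c) * (exp (a * s) * a) = exp (a * s) * (u' s + a*(u s - c))"
      by (simp add: algebra_simps)
    moreover have "exp (a * s) * (u' s + a*(u s - c)) \<le> 0"
      using le[OF s] by (simp add: mult_nonneg_nonpos)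
    ultimately show "\<exists>d. (w has_real_derivative d) (at s within {T..}) \<and> d \<le> 0" by auto
  qed (use t in auto)
  hence "(u t - c) * exp (a * t) \<le> (u T - c) * exp (a*T)" unfolding w_def .
  hence "(u t - c) * exp (a * t) * exp (-a * t) \<le> (u T - c) * exp (a*T) * exp (-a * t)"
    by (simp add: mult_right_mono)
  moreover have "exp (a * t) * exp (-a * t) = 1" by (simp add: exp_minus_inverse)
  moreover have "exp (a*T) * exp (-a * t) = exp (-a*(t-T))" by (simp add: mult_exp_exp algebra_simps)
  ultimately have "(u t - c) * (exp (a * t) * exp (-a * t)) \<le> (u T - c) * exp (-a*(t-T))"
    by (metis mult.assoc)
  thus ?thesis using \<open>exp (a * t) * exp (-a * t) = 1\<close> by simp
qed

lemma cmp_max: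
  fixes u u' :: "real \<Rightarrow> real"
  assumes T: "T \<ge> 0"
    and du: "\<And>t. t \<ge> T \<Longrightarrow> (u has_real_derivative u' t) (at t within {0..})"
    and le: "\<And>t. t \<ge> T \<Longrightarrow> u' t \<le> -a*(u t - c)"
    and t: "t \<ge> T" and a: "a \<ge> 0"
  shows "u t \<le> c + max 0 (u T - c)"
proof -
  have h: "u t - c \<le> (u T - c) * exp (-a*(t - T))" by (rule cmp_exp[OF T du le t])
  have e1: "exp (-a*(t - T)) \<le> 1" using a t by (simp add: mult_nonneg_nonneg)
  have e0: "exp (-a*(t - T)) > 0" by simp
  show ?thesis
  proof (cases "u T - c \<ge> 0")
    case True
    hence "(u T - c) * exp (-a*(t - T)) \<le> (u T - c) * 1" using e1 by (intro mult_left_mono) auto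
    thus ?thesis using h True by simp
  next
    case False
    hence "(u T - c) * exp (-a*(t - T)) \<le> 0" using e0 by (simp add: mult_nonpos_nonneg)
    thus ?thesis using h by simp
  qed
qed

lemma cmp_max_low:
  fixes u u' :: "real \<Rightarrow> real"
  assumes T: "T \<ge> 0"
    and du: "\<And>t. t \<ge> T \<Longrightarrow> (u has_real_derivative u' t) (at t within {0..})"
    and ge: "\<And>t. t \<ge> T \<Longrightarrow> u' t \<ge> -a*(u t - c)"
    and t: "t \<ge> T" and a: "a \<ge> 0"
  shows "u t \<ge> c - max 0 (c - u T)"
proof -
  have "(\<lambda>s. - u s) t \<le> (-c) + max 0 ((\<lambda>s. - u s) T - (-c))"
  proof (rule cmp_max[OF T _ _ t a, where u'="\<lambda>s. - u' s"])
    fix s assume "T \<le> s"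
    thus "((\<lambda>s. - u s) has_real_derivative - u' s) (at s within {0..})"
      using du by (auto intro!: derivative_eq_intros)
    show "- u' s \<le> - a * ((\<lambda>s. - u s) s - - c)" using ge[OF \<open>T \<le> s\<close>] by (simp add: algebra_simps)
  qed
  thus ?thesis by simp
qed

lemma ev_up:
  fixes u u' :: "real \<Rightarrow> real"
  assumes a: "a > 0"
    and du: "\<And>t. t \<ge> 0 \<Longrightarrow> (u has_real_derivative u' t) (at t within {0..})"
    and ev: "eventually (\<lambda>t. u' t \<le> -a*(u t - c)) at_top"
    and eta: "\<eta> > 0"
  shows "eventually (\<lambda>t. u t \<le> c + \<eta>) at_top"
proof -
  obtain T0 where T0: "\<And>t. t \<ge> T0 \<Longrightarrow> u' t \<le> -a*(u t - c)"
    using ev unfolding eventually_at_top_linorder by blast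
  define T where "T = max T0 0"
  define B where "B = max 0 (u T - c)"
  have B0: "B \<ge> 0" unfolding B_def by simp
  show ?thesis unfolding eventually_at_top_linorder
  proof (intro exI allI impI)
    fix t assume t: "t \<ge> T + B / (a * \<eta>)"
    have BaE: "B / (a * \<eta>) \<ge> 0" using B0 a eta by simp
    have tT: "t \<ge> T" using t BaE by linarith
    define x where "x = a * (t - T)"
    have x0: "x \<ge> 0" unfolding x_def using a tT by simp
    have h: "u t - c \<le> (u T - c) * exp (-x)" unfolding x_def
      using cmp_exp[of T u u' a c t] T_def du T0 tT by auto
    have h2: "(u T - c) * exp (-x) \<le> B * exp (-x)" unfolding B_def
      by (intro mult_right_mono) auto
    have "B * exp (-x) * (1 + x) \<le> B * exp (-x) * exp x"
      using B0 exp_ge_add_one_self[of x] by (intro mult_left_mono) auto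
    also have "\<dots> = B" by (simp add: mult.assoc flip: exp_add)
    finally have h3: "B * exp (-x) * (1 + x) \<le> B" .
    have "B \<le> \<eta> * a * (t - T)"
    proof -
      have "B = (a * \<eta>) * (B / (a * \<eta>))" using a eta by simp
      also have "\<dots> \<le> (a * \<eta>) * (t - T)" using t a eta by (intro mult_left_mono) auto
      finally show ?thesis by (simp add: algebra_simps)
    qed
    hence "B \<le> \<eta> * (1 + x)" unfolding x_def using eta by (simp add: algebra_simps)
    hence "B * exp (-x) * (1 + x) \<le> \<eta> * (1 + x)" using h3 by linarith
    hence "B * exp (-x) \<le> \<eta>" using x0 by simp
    thus "u t \<le> c + \<eta>" using h h2 by linarith
  qed
qed

lemma ev_low:
  fixes u u' :: "real \<Rightarrow> real"
  assumes a: "a > 0"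
    and du: "\<And>t. t \<ge> 0 \<Longrightarrow> (u has_real_derivative u' t) (at t within {0..})"
    and ev: "eventually (\<lambda>t. u' t \<ge> -a*(u t - c)) at_top"
    and eta: "\<eta> > 0"
  shows "eventually (\<lambda>t. u t \<ge> c - \<eta>) at_top"
proof -
  have "eventually (\<lambda>t. (\<lambda>s. - u s) t \<le> (-c) + \<eta>) at_top"
  proof (rule ev_up[OF a _ _ eta, where u'="\<lambda>s. - u' s"])
    fix s :: real assume "0 \<le> s"
    thus "((\<lambda>s. - u s) has_real_derivative - u' s) (at s within {0..})"
      using du by (auto intro!: derivative_eq_intros)
  next
    show "\<forall>\<^sub>F t in at_top. - u' t \<le> - a * ((\<lambda>s. - u s) t - - c)"
      using ev by eventually_elim (simp add: algebra_simps)
  qed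
  thus ?thesis by eventually_elim simp
qed

lemma tendsto_from_bounds:
  fixes u :: "real \<Rightarrow> real"
  assumes "\<And>e. e > 0 \<Longrightarrow> eventually (\<lambda>t. u t \<le> c + e) at_top"
    and "\<And>e. e > 0 \<Longrightarrow> eventually (\<lambda>t. u t \<ge> c - e) at_top"
  shows "(u \<longlongrightarrow> c) at_top"
  unfolding tendsto_iff
proof (intro allI impI)
  fix e :: real assume e: "e > 0"
  have "eventually (\<lambda>t. u t \<le> c + e/2 \<and> u t \<ge> c - e/2) at_top"
    using assms e by (intro eventually_conj) auto
  thus "eventually (\<lambda>t. dist (u t) c < e) at_top"
    by eventually_elim (use e in \<open>auto simp: dist_real_def abs_if\<close>)
qed



lemma inc_p1: "incidence_ok F f \<Longrightarrow> (\<forall>S\<ge>0. \<forall>I\<ge>0. F S I = I * f S I \<and> F S I \<ge> 0 \<and> f S I \<ge> 0)"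
  unfolding incidence_ok_def by (elim conjE) assumption
lemma inc_p2: "incidence_ok F f \<Longrightarrow> (\<forall>S\<ge>0. \<forall>I\<ge>0. \<exists>d>0. ((\<lambda>s. f s I) has_real_derivative d) (at S within {0..}))"
  unfolding incidence_ok_def by (elim conjE) assumption
lemma inc_p3: "incidence_ok F f \<Longrightarrow> (\<forall>S\<ge>0. \<forall>I\<ge>0. \<exists>d\<le>0. ((\<lambda>i. f S i) has_real_derivative d) (at I within {0..}))"
  unfolding incidence_ok_def by (elim conjE) assumption

lemma inc_nonneg: "incidence_ok F f \<Longrightarrow> S \<ge> 0 \<Longrightarrow> I \<ge> 0 \<Longrightarrow> 0 \<le> F S I"
  using inc_p1 by blast

lemma inc_f_nonneg: "incidence_ok F f \<Longrightarrow> S \<ge> 0 \<Longrightarrow> I \<ge> 0 \<Longrightarrow> 0 \<le> f S I"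
  using inc_p1 by blast

lemma inc_F_le:
  assumes "incidence_ok F f" "S \<ge> 0" "I \<ge> 0"
  shows "F S I \<le> I * f S 0"
proof -
  have "f S I \<le> f S 0"
  proof (rule nonincr_within[of 0 "\<lambda>i. f S i"])
    fix t :: real assume "t \<ge> 0"
    thus "\<exists>d. ((\<lambda>i. f S i) has_real_derivative d) (at t within {0..}) \<and> d \<le> 0"
      using inc_p3[OF assms(1)] assms(2) by blast
  qed (use assms in auto)
  moreover have "F S I = I * f S I" using inc_p1[OF assms(1)] assms by blast
  ultimately show ?thesis using assms(3) by (simp add: mult_left_mono)
qed

lemma inc_mono:
  assumes "incidence_ok F f" "0 \<le> s1" "s1 \<le> s2"
  shows "f s1 0 \<le> f s2 0"
proof -
  have "(\<lambda>s. - f s 0) s2 \<le> (\<lambda>s. - f s 0) s1"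
  proof (rule nonincr_within[of 0 "\<lambda>s. - f s 0"])
    fix t :: real assume "t \<ge> 0"
    then obtain d where "d > 0" "((\<lambda>s. f s 0) has_real_derivative d) (at t within {0..})"
      using inc_p2[OF assms(1)] by blast
    thus "\<exists>d. ((\<lambda>s. - f s 0) has_real_derivative d) (at t within {0..}) \<and> d \<le> 0"
      by (intro exI[of _ "-d"]) (auto intro!: derivative_eq_intros)
  qed (use assms in auto)
  thus ?thesis by simp
qed

lemma inc_cont:
  assumes "incidence_ok F f" "s > 0"
  shows "isCont (\<lambda>s. f s 0) s"
proof -
  have "\<exists>d>0. ((\<lambda>s. f s 0) has_real_derivative d) (at s within {0..})"
    using inc_p2[OF assms(1)] assms(2) by simp
  then obtain d where "((\<lambda>s. f s 0) has_real_derivative d) (at s within {0..})" by blast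
  hence "((\<lambda>s. f s 0) has_real_derivative d) (at s within {0<..})"
    by (rule DERIV_subset) auto
  moreover have "at s within {0<..} = at s" using assms by (intro at_within_open) auto
  ultimately have "((\<lambda>s. f s 0) has_real_derivative d) (at s)" by simp
  thus ?thesis by (rule DERIV_isCont)
qed

lemma inc_sigma:
  assumes "incidence_ok F f" "s \<ge> 0"
    and "((\<lambda>I. F s I) has_real_derivative \<sigma>) (at 0 within {0..})"
  shows "\<sigma> = f s 0"
proof -
  have "\<exists>d\<le>0. ((\<lambda>i. f s i) has_real_derivative d) (at 0 within {0..})"
    using inc_p3[OF assms(1)] assms(2) by simp
  then obtain d where d: "((\<lambda>i. f s i) has_real_derivative d) (at 0 within {0..})" by blast
  have h0: "((\<lambda>I. I * f s I) has_real_derivative (1 * f s 0 + 0 * d)) (at 0 within {0..})"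
    using DERIV_mult[OF DERIV_ident d] by simp
  have eq: "x * f s x = F s x" if "x \<in> {0..}" for x
    using inc_p1[OF assms(1)] assms(2) that by simp
  have h1: "((\<lambda>I. F s I) has_real_derivative f s 0) (at 0 within {0..})"
    by (rule has_field_derivative_transform_within[OF h0[simplified], of 1]) (auto simp: eq)
  have nb: "at (0::real) within {0..} \<noteq> bot"
    by (simp add: at_within_Ici_at_right)
  show ?thesis
    by (rule vector_derivative_unique_within[OF nb assms(3)[unfolded has_real_derivative_iff_has_vector_derivative]
       h1[unfolded has_real_derivative_iff_has_vector_derivative]])
qed

lemma vd_fst:
  assumes "(x has_vector_derivative v) F"
  shows "((\<lambda>t. fst (x t)) has_vector_derivative fst v) F"
  using has_derivative_fst[OF assms[unfolded has_vector_derivative_def]]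
  unfolding has_vector_derivative_def by simp

lemma vd_snd:
  assumes "(x has_vector_derivative v) F"
  shows "((\<lambda>t. snd (x t)) has_vector_derivative snd v) F"
  using has_derivative_snd[OF assms[unfolded has_vector_derivative_def]]
  unfolding has_vector_derivative_def by simp

lemma sol_comp:
  assumes "is_solution (model_rhs Lam mu r k a1 a2 F1 F2) x" "t \<ge> 0"
  defines "S \<equiv> \<lambda>t. fst (x t)" and "V \<equiv> \<lambda>t. fst (snd (x t))"
    and "I1 \<equiv> \<lambda>t. fst (snd (snd (x t)))" and "I2 \<equiv> \<lambda>t. snd (snd (snd (x t)))"
  shows "S t \<ge> 0" "V t \<ge> 0" "I1 t \<ge> 0" "I2 t \<ge> 0"
    "(S has_real_derivative (Lam - F1 (S t) (I1 t) - F2 (S t) (I2 t) - (r + mu) * S t)) (at t within {0..})"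
    "(V has_real_derivative (r * S t - (mu + k * I2 t) * V t)) (at t within {0..})"
    "(I1 has_real_derivative (F1 (S t) (I1 t) - a1 * I1 t)) (at t within {0..})"
    "(I2 has_real_derivative (F2 (S t) (I2 t) + k * I2 t * V t - a2 * I2 t)) (at t within {0..})"
proof -
  have n: "nonneg4 (x t)" and d: "(x has_vector_derivative model_rhs Lam mu r k a1 a2 F1 F2 (x t)) (at t within {0..})"
    using assms(1,2) unfolding is_solution_def by auto
  have xt: "x t = (S t, V t, I1 t, I2 t)" unfolding S_def V_def I1_def I2_def by simp
  show "S t \<ge> 0" "V t \<ge> 0" "I1 t \<ge> 0" "I2 t \<ge> 0" using n unfolding xt nonneg4_def by auto
  have g: "model_rhs Lam mu r k a1 a2 F1 F2 (x t) = (Lam - F1 (S t) (I1 t) - F2 (S t) (I2 t) - (r + mu) * S t,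
        r * S t - (mu + k * I2 t) * V t, F1 (S t) (I1 t) - a1 * I1 t, F2 (S t) (I2 t) + k * I2 t * V t - a2 * I2 t)"
    unfolding xt model_rhs_def by simp
  note d' = d[unfolded g]
  show "(S has_real_derivative (Lam - F1 (S t) (I1 t) - F2 (S t) (I2 t) - (r + mu) * S t)) (at t within {0..})"
    using vd_fst[OF d'] unfolding has_real_derivative_iff_has_vector_derivative S_def V_def I1_def I2_def by simp
  show "(V has_real_derivative (r * S t - (mu + k * I2 t) * V t)) (at t within {0..})"
    using vd_fst[OF vd_snd[OF d']] unfolding has_real_derivative_iff_has_vector_derivative S_def V_def I1_def I2_def by simp
  show "(I1 has_real_derivative (F1 (S t) (I1 t) - a1 * I1 t)) (at t within {0..})"
    using vd_fst[OF vd_snd[OF vd_snd[OF d']]] unfolding has_real_derivative_iff_has_vector_derivative S_def V_def I1_def I2_def by simp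
  show "(I2 has_real_derivative (F2 (S t) (I2 t) + k * I2 t * V t - a2 * I2 t)) (at t within {0..})"
    using vd_snd[OF vd_snd[OF vd_snd[OF d']]] unfolding has_real_derivative_iff_has_vector_derivative S_def V_def I1_def I2_def by simp
qed


lemma dist2_le:
  fixes a a' :: real
  shows "dist (a, p) (a', p') \<le> \<bar>a - a'\<bar> + dist p p'"
proof -
  have "dist (a, p) (a', p') \<le> \<bar>dist a a'\<bar> + \<bar>dist p p'\<bar>"
    unfolding dist_Pair_Pair by (rule sqrt_sum_squares_le_sum_abs)
  thus ?thesis by (simp add: dist_real_def)
qed

lemma dist4_le:
  fixes a b c d a' b' c' d' :: real
  shows "dist (a, b, c, d) (a', b', c', d') \<le> \<bar>a - a'\<bar> + \<bar>b - b'\<bar> + \<bar>c - c'\<bar> + \<bar>d - d'\<bar>"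
proof -
  have "dist (c, d) (c', d') \<le> \<bar>c - c'\<bar> + \<bar>d - d'\<bar>"
    using dist2_le[of c d c' d'] by (simp add: dist_real_def)
  moreover have "dist (b, c, d) (b', c', d') \<le> \<bar>b - b'\<bar> + dist (c, d) (c', d')"
    by (rule dist2_le)
  moreover have "dist (a, b, c, d) (a', b', c', d') \<le> \<bar>a - a'\<bar> + dist (b, c, d) (b', c', d')"
    by (rule dist2_le)
  ultimately show ?thesis by linarith
qed

lemma dist4_ge:
  fixes a b c d a' b' c' d' :: real
  shows "\<bar>a - a'\<bar> \<le> dist (a, b, c, d) (a', b', c', d')" "\<bar>b - b'\<bar> \<le> dist (a, b, c, d) (a', b', c', d')"
    "\<bar>c - c'\<bar> \<le> dist (a, b, c, d) (a', b', c', d')" "\<bar>d - d'\<bar> \<le> dist (a, b, c, d) (a', b', c', d')"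
proof -
  have 1: "dist a a' \<le> dist (a, b, c, d) (a', b', c', d')"
    using dist_fst_le[of "(a, b, c, d)" "(a', b', c', d')"] by simp
  have 2: "dist (b, c, d) (b', c', d') \<le> dist (a, b, c, d) (a', b', c', d')"
    using dist_snd_le[of "(a, b, c, d)" "(a', b', c', d')"] by simp
  have 3: "dist b b' \<le> dist (b, c, d) (b', c', d')"
    using dist_fst_le[of "(b, c, d)" "(b', c', d')"] by simp
  have 4: "dist (c, d) (c', d') \<le> dist (b, c, d) (b', c', d')"
    using dist_snd_le[of "(b, c, d)" "(b', c', d')"] by simp
  have 5: "dist c c' \<le> dist (c, d) (c', d')"
    using dist_fst_le[of "(c, d)" "(c', d')"] by simp
  have 6: "dist d d' \<le> dist (c, d) (c', d')"
    using dist_snd_le[of "(c, d)" "(c', d')"] by simp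
  show "\<bar>a - a'\<bar> \<le> dist (a, b, c, d) (a', b', c', d')" using 1 by (simp add: dist_real_def)
  show "\<bar>b - b'\<bar> \<le> dist (a, b, c, d) (a', b', c', d')" using 2 3 by (simp add: dist_real_def)
  show "\<bar>c - c'\<bar> \<le> dist (a, b, c, d) (a', b', c', d')" using 2 4 5 by (simp add: dist_real_def)
  show "\<bar>d - d'\<bar> \<le> dist (a, b, c, d) (a', b', c', d')" using 2 4 6 by (simp add: dist_real_def)
qed



lemma sol_facts:
  assumes sol: "is_solution (model_rhs Lam mu r k a1 a2 F1 F2) x"
    and defs: "S = (\<lambda>t. fst (x t))" "V = (\<lambda>t. fst (snd (x t)))"
      "I1 = (\<lambda>t. fst (snd (snd (x t))))" "I2 = (\<lambda>t. snd (snd (snd (x t))))"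
    and t: "t \<ge> 0"
  shows "S t \<ge> 0" "V t \<ge> 0" "I1 t \<ge> 0" "I2 t \<ge> 0"
    "(S has_real_derivative (Lam - F1 (S t) (I1 t) - F2 (S t) (I2 t) - (r + mu) * S t)) (at t within {0..})"
    "(V has_real_derivative (r * S t - (mu + k * I2 t) * V t)) (at t within {0..})"
    "(I1 has_real_derivative (F1 (S t) (I1 t) - a1 * I1 t)) (at t within {0..})"
    "(I2 has_real_derivative (F2 (S t) (I2 t) + k * I2 t * V t - a2 * I2 t)) (at t within {0..})"
  unfolding defs by (rule sol_comp[OF sol t])+

lemma x_eq: "x t = (fst (x t), fst (snd (x t)), fst (snd (snd (x t))), snd (snd (snd (x t))))"
  by simp


locale setting =
  fixes Lam mu r k :: real and F1 F2 f1 f2 :: "real \<Rightarrow> real \<Rightarrow> real" and S0 V0 :: real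
  assumes Lam: "Lam > 0" and mu: "mu > 0" and r: "r > 0" and k: "k > 0"
    and inc1: "incidence_ok F1 f1" and inc2: "incidence_ok F2 f2"
    and S0: "S0 = Lam / (r + mu)" and V0: "V0 = r * Lam / (mu * (r + mu))"
begin

lemma S0_pos: "S0 > 0" using S0 Lam mu r by simp
lemma V0_pos: "V0 > 0" using V0 Lam mu r by simp
lemma LamS0: "Lam = (r + mu) * S0" using S0 mu r by simp
lemma muV0: "mu * V0 = r * S0"
proof -
  have "mu * V0 = (mu * (r * Lam)) / (mu * (r + mu))" unfolding V0 by simp
  also have "\<dots> = (r * Lam) / (r + mu)" using mu by (intro mult_divide_mult_cancel_left) auto
  also have "\<dots> = r * S0" unfolding S0 by simp
  finally show ?thesis .
qed

lemma P1: "S \<ge> 0 \<Longrightarrow> I1 \<ge> 0 \<Longrightarrow> I2 \<ge> 0 \<Longrightarrow>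
    Lam - F1 S I1 - F2 S I2 - (r + mu) * S \<le> -(r + mu) * (S - S0)"
  using inc_nonneg[OF inc1, of S I1] inc_nonneg[OF inc2, of S I2] LamS0 by (simp add: algebra_simps)

lemma P2: "S \<ge> 0 \<Longrightarrow> V \<ge> 0 \<Longrightarrow> I2 \<ge> 0 \<Longrightarrow> S \<le> S0 + e \<Longrightarrow>
    r * S - (mu + k * I2) * V \<le> -mu * (V - (V0 + r * e / mu))"
proof -
  assume a: "S \<ge> 0" "V \<ge> 0" "I2 \<ge> 0" "S \<le> S0 + e"
  have "k * I2 * V \<ge> 0" using a k by simp
  moreover have "r * S \<le> r * (S0 + e)" using a r by simp
  moreover have "-mu * (V - (V0 + r * e / mu)) = r * S0 + r * e - mu * V"
    using muV0 mu by (simp add: field_simps)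
  ultimately show ?thesis by (simp add: algebra_simps)
qed

lemma P3: "S \<ge> 0 \<Longrightarrow> I1 \<ge> 0 \<Longrightarrow> S \<le> Sb \<Longrightarrow>
    F1 S I1 - a1 * I1 \<le> -(a1 - f1 Sb 0) * (I1 - 0)"
proof -
  assume a: "S \<ge> 0" "I1 \<ge> 0" "S \<le> Sb"
  have "F1 S I1 \<le> I1 * f1 S 0" by (rule inc_F_le[OF inc1 a(1,2)])
  also have "\<dots> \<le> I1 * f1 Sb 0" using inc_mono[OF inc1 a(1,3)] a(2) by (simp add: mult_left_mono)
  finally show ?thesis by (simp add: algebra_simps)
qed

lemma P4: "S \<ge> 0 \<Longrightarrow> I2 \<ge> 0 \<Longrightarrow> V \<ge> 0 \<Longrightarrow> S \<le> Sb \<Longrightarrow> V \<le> W \<Longrightarrow>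
    F2 S I2 + k * I2 * V - a2 * I2 \<le> -(a2 - f2 Sb 0 - k * W) * (I2 - 0)"
proof -
  assume a: "S \<ge> 0" "I2 \<ge> 0" "V \<ge> 0" "S \<le> Sb" "V \<le> W"
  have "F2 S I2 \<le> I2 * f2 S 0" by (rule inc_F_le[OF inc2 a(1,2)])
  also have "\<dots> \<le> I2 * f2 Sb 0" using inc_mono[OF inc2 a(1,4)] a(2) by (simp add: mult_left_mono)
  finally have 1: "F2 S I2 \<le> I2 * f2 Sb 0" .
  have "k * I2 * V \<le> k * I2 * W" using a k by (simp add: mult_left_mono)
  with 1 show ?thesis by (simp add: algebra_simps)
qed

lemma P5: "S \<ge> 0 \<Longrightarrow> I1 \<ge> 0 \<Longrightarrow> I2 \<ge> 0 \<Longrightarrow> S \<le> Sb \<Longrightarrow> I1 \<le> e \<Longrightarrow> I2 \<le> e \<Longrightarrow>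
    f1 Sb 0 \<le> M \<Longrightarrow> f2 Sb 0 \<le> M \<Longrightarrow>
    Lam - F1 S I1 - F2 S I2 - (r + mu) * S \<ge> -(r + mu) * (S - (S0 - 2 * M * e / (r + mu)))"
proof -
  assume a: "S \<ge> 0" "I1 \<ge> 0" "I2 \<ge> 0" "S \<le> Sb" "I1 \<le> e" "I2 \<le> e" "f1 Sb 0 \<le> M" "f2 Sb 0 \<le> M"
  have M0: "M \<ge> 0" using inc_f_nonneg[OF inc1, of Sb 0] a by linarith
  have "F1 S I1 \<le> I1 * f1 S 0" by (rule inc_F_le[OF inc1 a(1,2)])
  also have "\<dots> \<le> I1 * M" using inc_mono[OF inc1 a(1,4)] a by (intro mult_left_mono) auto
  also have "\<dots> \<le> e * M" using a M0 by (intro mult_right_mono) auto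
  finally have 1: "F1 S I1 \<le> e * M" .
  have "F2 S I2 \<le> I2 * f2 S 0" by (rule inc_F_le[OF inc2 a(1,3)])
  also have "\<dots> \<le> I2 * M" using inc_mono[OF inc2 a(1,4)] a by (intro mult_left_mono) auto
  also have "\<dots> \<le> e * M" using a M0 by (intro mult_right_mono) auto
  finally have 2: "F2 S I2 \<le> e * M" .
  have "-(r + mu) * (S - (S0 - 2 * M * e / (r + mu))) = Lam - 2 * M * e - (r + mu) * S"
    using LamS0 mu r by (simp add: field_simps)
  with 1 2 show ?thesis by (simp add: algebra_simps)
qed

lemma P6: "S \<ge> S0 - e \<Longrightarrow> I2 \<ge> 0 \<Longrightarrow> I2 \<le> e \<Longrightarrow> V \<ge> 0 \<Longrightarrow> V \<le> W \<Longrightarrow>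
    r * S - (mu + k * I2) * V \<ge> -mu * (V - (V0 - (r + k * W) * e / mu))"
proof -
  assume a: "S \<ge> S0 - e" "I2 \<ge> 0" "I2 \<le> e" "V \<ge> 0" "V \<le> W"
  have "k * I2 * V \<le> k * e * W"
  proof -
    have "I2 * V \<le> e * W" using a by (intro mult_mono) auto
    thus ?thesis using k by simp
  qed
  moreover have "r * S \<ge> r * (S0 - e)" using a r by simp
  moreover have "-mu * (V - (V0 - (r + k * W) * e / mu)) = r * S0 - (r + k * W) * e - mu * V"
    using muV0 mu by (simp add: field_simps)
  ultimately show ?thesis by (simp add: algebra_simps)
qed

end



context setting begin

lemma stab:
  fixes a1 a2 eta0 :: real
  assumes a1: "a1 > 0" and a2: "a2 > 0" and eta: "eta0 > 0"
    and c1: "f1 (S0 + eta0) 0 < a1" and c2: "f2 (S0 + eta0) 0 + k * (V0 + (r/mu + 1) * eta0) < a2"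
  shows "\<forall>\<epsilon>>0. \<exists>\<delta>>0. \<forall>x. is_solution (model_rhs Lam mu r k a1 a2 F1 F2) x \<and> dist (x 0) (S0, V0, 0, 0) < \<delta>
            \<longrightarrow> (\<forall>t\<ge>0. dist (x t) (S0, V0, 0, 0) < \<epsilon>)"
proof (intro allI impI)
  fix \<epsilon> :: real assume eps: "\<epsilon> > 0"
  define W where "W = V0 + (r/mu + 1) * eta0"
  define Sb where "Sb = S0 + eta0"
  define M where "M = max (f1 Sb 0) (f2 Sb 0)"
  have Sb0: "Sb \<ge> 0" unfolding Sb_def using S0_pos eta by simp
  have M0: "M \<ge> 0" unfolding M_def using inc_f_nonneg[OF inc1 Sb0, of 0] by simp
  have W0: "W \<ge> 0" unfolding W_def using V0_pos eta mu r by (simp add: add_nonneg_nonneg)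
  define A where "A = 2 * M / (r + mu) + 1"
  define C where "C = (r + k * W) * A / mu + 1"
  define K where "K = A + (r/mu + 1) + C + 2"
  have A1: "A \<ge> 1" unfolding A_def using M0 mu r by simp
  have C1: "C \<ge> 1" unfolding C_def using A1 W0 k r mu by simp
  have K1: "K \<ge> 1" unfolding K_def using A1 C1 r mu by (simp add: add_nonneg_nonneg)
  define \<delta> where "\<delta> = min eta0 (\<epsilon> / K)"
  have dpos: "\<delta> > 0" unfolding \<delta>_def using eta eps K1 by simp
  show "\<exists>\<delta>>0. \<forall>x. is_solution (model_rhs Lam mu r k a1 a2 F1 F2) x \<and> dist (x 0) (S0, V0, 0, 0) < \<delta>
            \<longrightarrow> (\<forall>t\<ge>0. dist (x t) (S0, V0, 0, 0) < \<epsilon>)"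
  proof (intro exI[of _ \<delta>] conjI dpos allI impI)
    fix x t assume xa: "is_solution (model_rhs Lam mu r k a1 a2 F1 F2) x \<and> dist (x 0) (S0, V0, 0, 0) < \<delta>"
      and t: "t \<ge> (0::real)"
    hence sol: "is_solution (model_rhs Lam mu r k a1 a2 F1 F2) x" by simp
    define S where "S = (\<lambda>t. fst (x t))"
    define V where "V = (\<lambda>t. fst (snd (x t)))"
    define I1 where "I1 = (\<lambda>t. fst (snd (snd (x t))))"
    define I2 where "I2 = (\<lambda>t. snd (snd (snd (x t))))"
    note fa = sol_facts[OF sol S_def V_def I1_def I2_def]
    have xeq: "x s = (S s, V s, I1 s, I2 s)" for s unfolding S_def V_def I1_def I2_def by simp
    define D where "D = dist (x 0) (S0, V0, 0, 0)"
    have DD: "D < \<delta>" "D \<ge> 0" unfolding D_def using xa by auto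
    have Deta: "D < eta0" using DD unfolding \<delta>_def by simp
    have DK: "K * D < \<epsilon>"
    proof -
      have "K * D < K * (\<epsilon> / K)" using DD K1 unfolding \<delta>_def by (intro mult_strict_left_mono) auto
      thus ?thesis using K1 by simp
    qed
    have i0: "\<bar>S 0 - S0\<bar> \<le> D" "\<bar>V 0 - V0\<bar> \<le> D" "\<bar>I1 0 - 0\<bar> \<le> D" "\<bar>I2 0 - 0\<bar> \<le> D"
      unfolding D_def xeq[of 0] by (rule dist4_ge)+
    define uS where "uS = (\<lambda>t. Lam - F1 (S t) (I1 t) - F2 (S t) (I2 t) - (r + mu) * S t)"
    define uV where "uV = (\<lambda>t. r * S t - (mu + k * I2 t) * V t)"
    define uI1 where "uI1 = (\<lambda>t. F1 (S t) (I1 t) - a1 * I1 t)"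
    define uI2 where "uI2 = (\<lambda>t. F2 (S t) (I2 t) + k * I2 t * V t - a2 * I2 t)"
    have dS: "\<And>t. t \<ge> 0 \<Longrightarrow> (S has_real_derivative uS t) (at t within {0..})" unfolding uS_def by (rule fa(5))
    have dV: "\<And>t. t \<ge> 0 \<Longrightarrow> (V has_real_derivative uV t) (at t within {0..})" unfolding uV_def by (rule fa(6))
    have dI1: "\<And>t. t \<ge> 0 \<Longrightarrow> (I1 has_real_derivative uI1 t) (at t within {0..})" unfolding uI1_def by (rule fa(7))
    have dI2: "\<And>t. t \<ge> 0 \<Longrightarrow> (I2 has_real_derivative uI2 t) (at t within {0..})" unfolding uI2_def by (rule fa(8))
    have B1: "S s \<le> S0 + D" if s: "s \<ge> 0" for s
    proof -
      have "S s \<le> S0 + max 0 (S 0 - S0)"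
      proof (rule cmp_max[where u'=uS and a="r + mu", OF _ dS _ s])
        fix \<tau> :: real assume h: "\<tau> \<ge> 0"
        show "uS \<tau> \<le> -(r + mu) * (S \<tau> - S0)" unfolding uS_def by (rule P1[OF fa(1)[OF h] fa(3)[OF h] fa(4)[OF h]])
      qed (use r mu in auto)
      thus ?thesis using i0 DD by linarith
    qed
    have B2: "V s \<le> V0 + r * D / mu + D" if s: "s \<ge> 0" for s
    proof -
      have "V s \<le> (V0 + r * D / mu) + max 0 (V 0 - (V0 + r * D / mu))"
      proof (rule cmp_max[where u'=uV and a="mu", OF _ dV _ s])
        fix \<tau> :: real assume h: "\<tau> \<ge> 0"
        show "uV \<tau> \<le> -mu * (V \<tau> - (V0 + r * D / mu))" unfolding uV_def by (rule P2[OF fa(1)[OF h] fa(2)[OF h] fa(4)[OF h] B1[OF h]])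
      qed (use mu in auto)
      moreover have "r * D / mu \<ge> 0" using DD r mu by simp
      ultimately show ?thesis using i0 DD by linarith
    qed
    have VW: "V s \<le> W" if s: "s \<ge> 0" for s
    proof -
      have "r * D / mu \<le> r * eta0 / mu" using Deta r mu by (simp add: divide_right_mono)
      thus ?thesis using B2[OF s] Deta unfolding W_def by (simp add: algebra_simps)
    qed
    have SSb: "S s \<le> Sb" if s: "s \<ge> 0" for s using B1[OF s] Deta unfolding Sb_def by simp
    have B3: "I1 s \<le> D" if s: "s \<ge> 0" for s
    proof -
      have "I1 s \<le> 0 + max 0 (I1 0 - 0)"
      proof (rule cmp_max[where u'=uI1 and a="a1 - f1 Sb 0", OF _ dI1 _ s])
        fix \<tau> :: real assume h: "\<tau> \<ge> 0"
        show "uI1 \<tau> \<le> -(a1 - f1 Sb 0) * (I1 \<tau> - 0)" unfolding uI1_def by (rule P3[OF fa(1)[OF h] fa(3)[OF h] SSb[OF h]])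
      qed (use c1 in \<open>auto simp: Sb_def\<close>)
      thus ?thesis using i0 DD by linarith
    qed
    have B4: "I2 s \<le> D" if s: "s \<ge> 0" for s
    proof -
      have "I2 s \<le> 0 + max 0 (I2 0 - 0)"
      proof (rule cmp_max[where u'=uI2 and a="a2 - f2 Sb 0 - k * W", OF _ dI2 _ s])
        fix \<tau> :: real assume h: "\<tau> \<ge> 0"
        show "uI2 \<tau> \<le> -(a2 - f2 Sb 0 - k * W) * (I2 \<tau> - 0)" unfolding uI2_def
          by (rule P4[OF fa(1)[OF h] fa(4)[OF h] fa(2)[OF h] SSb[OF h] VW[OF h]])
      qed (use c2 in \<open>auto simp: Sb_def W_def\<close>)
      thus ?thesis using i0 DD by linarith
    qed
    have B5: "S s \<ge> S0 - 2 * M * D / (r + mu) - D" if s: "s \<ge> 0" for s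
    proof -
      have "S s \<ge> (S0 - 2 * M * D / (r + mu)) - max 0 ((S0 - 2 * M * D / (r + mu)) - S 0)"
      proof (rule cmp_max_low[where u'=uS and a="r + mu", OF _ dS _ s])
        fix \<tau> :: real assume h: "\<tau> \<ge> 0"
        show "uS \<tau> \<ge> -(r + mu) * (S \<tau> - (S0 - 2 * M * D / (r + mu)))" unfolding uS_def
          by (rule P5[OF fa(1)[OF h] fa(3)[OF h] fa(4)[OF h] SSb[OF h] B3[OF h] B4[OF h]]) (simp_all add: M_def)
      qed (use r mu in auto)
      moreover have "2 * M * D / (r + mu) \<ge> 0" using M0 DD r mu by simp
      ultimately show ?thesis using i0 DD by linarith
    qed
    have B5': "S s \<ge> S0 - A * D" if s: "s \<ge> 0" for s
      using B5[OF s] unfolding A_def by (simp add: algebra_simps)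
    have B6: "V s \<ge> V0 - (r + k * W) * (A * D) / mu - D" if s: "s \<ge> 0" for s
    proof -
      have AD: "D \<le> A * D" using A1 DD by (simp add: mult_right_mono[of 1 A D, simplified])
      have "V s \<ge> (V0 - (r + k * W) * (A * D) / mu) - max 0 ((V0 - (r + k * W) * (A * D) / mu) - V 0)"
      proof (rule cmp_max_low[where u'=uV and a="mu", OF _ dV _ s])
        fix \<tau> :: real assume h: "\<tau> \<ge> 0"
        have "I2 \<tau> \<le> A * D" using B4[OF h] AD by linarith
        thus "uV \<tau> \<ge> -mu * (V \<tau> - (V0 - (r + k * W) * (A * D) / mu))" unfolding uV_def
          by (intro P6[OF B5'[OF h] fa(4)[OF h] _ fa(2)[OF h] VW[OF h]])
      qed (use mu in auto)
      moreover have "(r + k * W) * (A * D) / mu \<ge> 0" using W0 A1 DD r k mu by simp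
      ultimately show ?thesis using i0 DD by linarith
    qed
    have "D \<le> A * D" using A1 DD mult_right_mono[of 1 A D] by simp
    hence e1: "\<bar>S t - S0\<bar> \<le> A * D" using B1[OF t] B5'[OF t] by (simp add: abs_le_iff)
    have e2: "\<bar>V t - V0\<bar> \<le> (r/mu + 1) * D + C * D"
    proof -
      have "(r + k * W) * (A * D) / mu + D = C * D" unfolding C_def using mu by (simp add: field_simps)
      moreover have "r * D / mu + D = (r/mu + 1) * D" by (simp add: field_simps)
      moreover have "(r/mu + 1) * D \<ge> 0" "C * D \<ge> 0" using r mu DD C1 by simp_all
      ultimately show ?thesis using B2[OF t] B6[OF t] by (simp add: abs_le_iff)
    qed
    have e3: "\<bar>I1 t - 0\<bar> \<le> D" using B3[OF t] fa(3)[OF t] by simp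
    have e4: "\<bar>I2 t - 0\<bar> \<le> D" using B4[OF t] fa(4)[OF t] by simp
    have "dist (x t) (S0, V0, 0, 0) \<le> \<bar>S t - S0\<bar> + \<bar>V t - V0\<bar> + \<bar>I1 t - 0\<bar> + \<bar>I2 t - 0\<bar>"
      unfolding xeq[of t] by (rule dist4_le)
    also have "\<dots> \<le> A * D + ((r/mu + 1) * D + C * D) + D + D" using e1 e2 e3 e4 by linarith
    also have "\<dots> = K * D" unfolding K_def by (simp add: algebra_simps)
    finally show "dist (x t) (S0, V0, 0, 0) < \<epsilon>" using DK by linarith
  qed
qed

end



lemma ev_always: "(\<And>t::real. t \<ge> 0 \<Longrightarrow> P t) \<Longrightarrow> eventually P at_top"
  unfolding eventually_at_top_linorder by blast

lemma scale_up:
  fixes L :: real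
  assumes "\<And>e. e > 0 \<Longrightarrow> eventually (\<lambda>t. u t \<le> c + L * e) F" "L > 0" "e > 0"
  shows "eventually (\<lambda>t. u t \<le> c + e) F"
  using assms(1)[of "e / L"] assms(2,3) by simp

lemma scale_low:
  fixes L :: real
  assumes "\<And>e. e > 0 \<Longrightarrow> eventually (\<lambda>t. u t \<ge> c - L * e) F" "L > 0" "e > 0"
  shows "eventually (\<lambda>t. u t \<ge> c - e) F"
  using assms(1)[of "e / L"] assms(2,3) by simp

context setting begin

lemma attr:
  fixes a1 a2 eta0 :: real
  assumes a1: "a1 > 0" and a2: "a2 > 0" and eta: "eta0 > 0"
    and c1: "f1 (S0 + eta0) 0 < a1" and c2: "f2 (S0 + eta0) 0 + k * (V0 + (r/mu + 1) * eta0) < a2"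
  shows "\<forall>x. is_solution (model_rhs Lam mu r k a1 a2 F1 F2) x \<longrightarrow> (x \<longlongrightarrow> (S0, V0, 0, 0)) at_top"
proof (intro allI impI)
  fix x assume sol: "is_solution (model_rhs Lam mu r k a1 a2 F1 F2) x"
  define W where "W = V0 + (r/mu + 1) * eta0"
  define Sb where "Sb = S0 + eta0"
  define M where "M = max (f1 Sb 0) (f2 Sb 0)"
  have Sb0: "Sb \<ge> 0" unfolding Sb_def using S0_pos eta by simp
  have M0: "M \<ge> 0" unfolding M_def using inc_f_nonneg[OF inc1 Sb0, of 0] by simp
  have Mf1: "f1 Sb 0 \<le> M" "f2 Sb 0 \<le> M" unfolding M_def by auto
  have W0: "W \<ge> 0" unfolding W_def using V0_pos eta mu r by (simp add: add_nonneg_nonneg)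
  define S where "S = (\<lambda>t. fst (x t))"
  define V where "V = (\<lambda>t. fst (snd (x t)))"
  define I1 where "I1 = (\<lambda>t. fst (snd (snd (x t))))"
  define I2 where "I2 = (\<lambda>t. snd (snd (snd (x t))))"
  note fa = sol_facts[OF sol S_def V_def I1_def I2_def]
  have xeq: "x = (\<lambda>s. (S s, V s, I1 s, I2 s))" unfolding S_def V_def I1_def I2_def by simp
  define uS where "uS = (\<lambda>t. Lam - F1 (S t) (I1 t) - F2 (S t) (I2 t) - (r + mu) * S t)"
  define uV where "uV = (\<lambda>t. r * S t - (mu + k * I2 t) * V t)"
  define uI1 where "uI1 = (\<lambda>t. F1 (S t) (I1 t) - a1 * I1 t)"
  define uI2 where "uI2 = (\<lambda>t. F2 (S t) (I2 t) + k * I2 t * V t - a2 * I2 t)"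
  have dS: "\<And>t. t \<ge> 0 \<Longrightarrow> (S has_real_derivative uS t) (at t within {0..})" unfolding uS_def by (rule fa(5))
  have dV: "\<And>t. t \<ge> 0 \<Longrightarrow> (V has_real_derivative uV t) (at t within {0..})" unfolding uV_def by (rule fa(6))
  have dI1: "\<And>t. t \<ge> 0 \<Longrightarrow> (I1 has_real_derivative uI1 t) (at t within {0..})" unfolding uI1_def by (rule fa(7))
  have dI2: "\<And>t. t \<ge> 0 \<Longrightarrow> (I2 has_real_derivative uI2 t) (at t within {0..})" unfolding uI2_def by (rule fa(8))
  have ge0: "eventually (\<lambda>t. t \<ge> (0::real)) at_top" by (rule eventually_ge_at_top)
  have E1: "eventually (\<lambda>t. S t \<le> S0 + \<eta>) at_top" if h: "\<eta> > 0" for \<eta>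
  proof (rule ev_up[where u'=uS and a="r + mu", OF _ dS _ h])
    show "eventually (\<lambda>t. uS t \<le> -(r + mu) * (S t - S0)) at_top"
    proof (rule ev_always)
      fix \<tau> :: real assume h: "\<tau> \<ge> 0"
      show "uS \<tau> \<le> -(r + mu) * (S \<tau> - S0)" unfolding uS_def by (rule P1[OF fa(1)[OF h] fa(3)[OF h] fa(4)[OF h]])
    qed
  qed (use r mu in auto)
  have E2: "eventually (\<lambda>t. V t \<le> (V0 + r * \<eta> / mu) + \<eta>) at_top" if h: "\<eta> > 0" for \<eta>
  proof (rule ev_up[where u'=uV and a="mu", OF _ dV _ h])
    show "eventually (\<lambda>t. uV t \<le> -mu * (V t - (V0 + r * \<eta> / mu))) at_top"
      using E1[OF h] ge0
    proof eventually_elim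
      case (elim \<tau>)
      hence h: "\<tau> \<ge> 0" by simp
      show ?case unfolding uV_def by (rule P2[OF fa(1)[OF h] fa(2)[OF h] fa(4)[OF h]]) (use elim in simp)
    qed
  qed (use mu in auto)
  have E3: "eventually (\<lambda>t. S t \<le> Sb) at_top" using E1[OF eta] unfolding Sb_def .
  have E3': "eventually (\<lambda>t. V t \<le> W) at_top"
  proof -
    have "V0 + r * eta0 / mu + eta0 = W" unfolding W_def by (simp add: algebra_simps)
    thus ?thesis using E2[OF eta] by simp
  qed
  have E4: "eventually (\<lambda>t. I1 t \<le> 0 + e) at_top" if h: "e > 0" for e
  proof (rule ev_up[where u'=uI1 and a="a1 - f1 Sb 0", OF _ dI1 _ h])
    show "eventually (\<lambda>t. uI1 t \<le> -(a1 - f1 Sb 0) * (I1 t - 0)) at_top"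
      using E3 ge0
    proof eventually_elim
      case (elim \<tau>)
      hence h: "\<tau> \<ge> 0" by simp
      show ?case unfolding uI1_def by (rule P3[OF fa(1)[OF h] fa(3)[OF h]]) (use elim in simp)
    qed
  qed (use c1 in \<open>auto simp: Sb_def\<close>)
  have E5: "eventually (\<lambda>t. I2 t \<le> 0 + e) at_top" if h: "e > 0" for e
  proof (rule ev_up[where u'=uI2 and a="a2 - f2 Sb 0 - k * W", OF _ dI2 _ h])
    show "eventually (\<lambda>t. uI2 t \<le> -(a2 - f2 Sb 0 - k * W) * (I2 t - 0)) at_top"
      using E3 E3' ge0
    proof eventually_elim
      case (elim \<tau>)
      hence h: "\<tau> \<ge> 0" by simp
      show ?case unfolding uI2_def by (rule P4[OF fa(1)[OF h] fa(4)[OF h] fa(2)[OF h]]) (use elim in simp_all)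
    qed
  qed (use c2 in \<open>auto simp: Sb_def W_def\<close>)
  have L0: "eventually (\<lambda>t. u t \<ge> 0 - e) at_top" if "\<And>t. t \<ge> 0 \<Longrightarrow> u t \<ge> 0" "e > 0" for u :: "real \<Rightarrow> real" and e
    using that by (intro ev_always) force
  have T3: "(I1 \<longlongrightarrow> 0) at_top" by (rule tendsto_from_bounds[OF E4 L0]) (use fa(3) in auto)
  have T4: "(I2 \<longlongrightarrow> 0) at_top" by (rule tendsto_from_bounds[OF E5 L0]) (use fa(4) in auto)
  define A where "A = 2 * M / (r + mu) + 1"
  have A1: "A \<ge> 1" unfolding A_def using M0 mu r by simp
  have E6: "eventually (\<lambda>t. S t \<ge> S0 - A * e) at_top" if h: "e > 0" for e
  proof -
    have "eventually (\<lambda>t. S t \<ge> (S0 - 2 * M * e / (r + mu)) - e) at_top"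
    proof (rule ev_low[where u'=uS and a="r + mu", OF _ dS _ h])
      show "eventually (\<lambda>t. uS t \<ge> -(r + mu) * (S t - (S0 - 2 * M * e / (r + mu)))) at_top"
        using E3 E4[OF h] E5[OF h] ge0
      proof eventually_elim
        case (elim \<tau>)
        hence h: "\<tau> \<ge> 0" by simp
        show ?case unfolding uS_def
          by (rule P5[OF fa(1)[OF h] fa(3)[OF h] fa(4)[OF h] _ _ _ Mf1]) (use elim in simp_all)
      qed
    qed (use r mu in auto)
    moreover have "(S0 - 2 * M * e / (r + mu)) - e = S0 - A * e" unfolding A_def by (simp add: algebra_simps)
    ultimately show ?thesis by simp
  qed
  have T1: "(S \<longlongrightarrow> S0) at_top"
  proof (rule tendsto_from_bounds)
    fix e :: real assume "e > 0" thus "eventually (\<lambda>t. S t \<le> S0 + e) at_top" by (rule E1)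
  next
    fix e :: real assume e: "e > 0" 
    have "A > 0" using A1 by simp
    from scale_low[OF E6 this e] show "eventually (\<lambda>t. S t \<ge> S0 - e) at_top" .
  qed
  define C where "C = (r + k * W) / mu + 1"
  have C1: "C \<ge> 1" unfolding C_def using W0 k r mu by simp
  have E7: "eventually (\<lambda>t. V t \<ge> V0 - C * e) at_top" if h: "e > 0" for e
  proof -
    have E6': "eventually (\<lambda>t. S t \<ge> S0 - e) at_top" by (rule scale_low[OF E6]) (use A1 h in auto)
    have "eventually (\<lambda>t. V t \<ge> (V0 - (r + k * W) * e / mu) - e) at_top"
    proof (rule ev_low[where u'=uV and a="mu", OF _ dV _ h])
      show "eventually (\<lambda>t. uV t \<ge> -mu * (V t - (V0 - (r + k * W) * e / mu))) at_top"
        using E6' E5[OF h] E3' ge0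
      proof eventually_elim
        case (elim \<tau>)
        hence h: "\<tau> \<ge> 0" by simp
        show ?case unfolding uV_def
          by (rule P6[OF _ fa(4)[OF h] _ fa(2)[OF h]]) (use elim in simp_all)
      qed
    qed (use mu in auto)
    moreover have "(V0 - (r + k * W) * e / mu) - e = V0 - C * e" unfolding C_def using mu by (simp add: field_simps)
    ultimately show ?thesis by simp
  qed
  have T2: "(V \<longlongrightarrow> V0) at_top"
  proof (rule tendsto_from_bounds)
    fix e :: real assume e: "e > 0"
    have "eventually (\<lambda>t. V t \<le> V0 + (r / mu + 1) * e') at_top" if "e' > 0" for e'
    proof -
      have eq: "(V0 + r * e' / mu) + e' = V0 + (r / mu + 1) * e'" by (simp add: algebra_simps)
      show ?thesis using E2[OF that] unfolding eq .
    qed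
    moreover have "r / mu + 1 > 0" using r mu by (simp add: add_pos_pos)
    ultimately show "eventually (\<lambda>t. V t \<le> V0 + e) at_top" by (rule scale_up[OF _ _ e])
  next
    fix e :: real assume e: "e > 0" 
    have "C > 0" using C1 by simp
    from scale_low[OF E7 this e] show "eventually (\<lambda>t. V t \<ge> V0 - e) at_top" .
  qed
  show "(x \<longlongrightarrow> (S0, V0, 0, 0)) at_top" unfolding xeq
    by (intro tendsto_Pair T1 T2 T3 T4)
qed

end



lemma core:
  fixes Lam mu r k a1 a2 :: real and F1 F2 f1 f2 :: "real \<Rightarrow> real \<Rightarrow> real"
  assumes Lam: "Lam > 0" and mu: "mu > 0" and r: "r > 0" and k: "k > 0" and a1: "a1 > 0" and a2: "a2 > 0"
    and inc1: "incidence_ok F1 f1" and inc2: "incidence_ok F2 f2"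
    and c1: "f1 (Lam / (r + mu)) 0 < a1"
    and c2: "f2 (Lam / (r + mu)) 0 + k * (r * Lam / (mu * (r + mu))) < a2"
  shows "globally_asymptotically_stable (model_rhs Lam mu r k a1 a2 F1 F2)
           (Lam / (r + mu), r * Lam / (mu * (r + mu)), 0, 0)"
proof -
  define S0 where "S0 = Lam / (r + mu)"
  define V0 where "V0 = r * Lam / (mu * (r + mu))"
  interpret setting Lam mu r k F1 F2 f1 f2 S0 V0
    by unfold_locales (use Lam mu r k inc1 inc2 S0_def V0_def in auto)
  define psi where "psi = (\<lambda>s. f2 s 0 + k * (V0 + (r/mu + 1) * (s - S0)))"
  have cont1: "isCont (\<lambda>s. f1 s 0) S0" by (rule inc_cont[OF inc1 S0_pos])
  have cont2: "isCont psi S0" unfolding psi_def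
    by (intro continuous_intros inc_cont[OF inc2 S0_pos])
  have ev1: "eventually (\<lambda>s. f1 s 0 < a1) (at_right S0)"
  proof -
    have "eventually (\<lambda>s. f1 s 0 < a1) (at S0)"
      using order_tendstoD(2)[OF cont1[unfolded isCont_def]] c1 unfolding S0_def by simp
    thus ?thesis by (simp add: eventually_at_split)
  qed
  have ev2: "eventually (\<lambda>s. psi s < a2) (at_right S0)"
  proof -
    have "psi S0 < a2" using c2 unfolding psi_def S0_def V0_def by simp
    hence "eventually (\<lambda>s. psi s < a2) (at S0)"
      using order_tendstoD(2)[OF cont2[unfolded isCont_def]] by simp
    thus ?thesis by (simp add: eventually_at_split)
  qed
  have "eventually (\<lambda>s. f1 s 0 < a1 \<and> psi s < a2 \<and> S0 < s) (at_right S0)"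
    using ev1 ev2 eventually_at_right_less by (intro eventually_conj) auto
  then obtain s where s: "f1 s 0 < a1" "psi s < a2" "S0 < s"
    using eventually_happens[of _ "at_right S0"] by auto
  define eta0 where "eta0 = s - S0"
  have eta: "eta0 > 0" and ss: "s = S0 + eta0" using s unfolding eta0_def by auto
  have c1': "f1 (S0 + eta0) 0 < a1" using s ss by simp
  have c2': "f2 (S0 + eta0) 0 + k * (V0 + (r/mu + 1) * eta0) < a2" using s(2) ss unfolding psi_def by simp
  show ?thesis
    unfolding globally_asymptotically_stable_def S0_def[symmetric] V0_def[symmetric]
    using stab[OF a1 a2 eta c1' c2'] attr[OF a1 a2 eta c1' c2'] by blast
qed

theorem mainTheorem12:
  fixes Lam mu r k gamma1 gamma2 v1 v2 sigma1 sigma2 :: real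
    and F1 F2 f1 f2 :: "real \<Rightarrow> real \<Rightarrow> real"
  assumes "Lam > 0" "mu > 0" "r > 0" "k > 0" "gamma1 > 0" "gamma2 > 0" "v1 \<ge> 0" "v2 \<ge> 0"
    and "incidence_ok F1 f1" "incidence_ok F2 f2"
    and "((\<lambda>I. F1 (Lam / (r + mu)) I) has_real_derivative sigma1) (at 0 within {0..})"
    and "((\<lambda>I. F2 (Lam / (r + mu)) I) has_real_derivative sigma2) (at 0 within {0..})"
    and "max (sigma1 / (gamma1 + v1 + mu))
             (sigma2 / (gamma2 + v2 + mu) + k * r * Lam / ((gamma2 + v2 + mu) * mu * (r + mu))) < 1"
  shows "globally_asymptotically_stable
           (model_rhs Lam mu r k (gamma1 + v1 + mu) (gamma2 + v2 + mu) F1 F2)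
           (Lam / (r + mu), r * Lam / (mu * (r + mu)), 0, 0)"
proof -
  define a1 where "a1 = gamma1 + v1 + mu"
  define a2 where "a2 = gamma2 + v2 + mu"
  have a1p: "a1 > 0" and a2p: "a2 > 0" unfolding a1_def a2_def using assms by auto
  have S0nn: "Lam / (r + mu) \<ge> 0" using assms by simp
  have s1: "sigma1 = f1 (Lam / (r + mu)) 0" by (rule inc_sigma[OF assms(9) S0nn assms(11)])
  have s2: "sigma2 = f2 (Lam / (r + mu)) 0" by (rule inc_sigma[OF assms(10) S0nn assms(12)])
  have m1: "sigma1 / a1 < 1" and m2: "sigma2 / a2 + k * r * Lam / (a2 * mu * (r + mu)) < 1"
    using assms(13) unfolding a1_def[symmetric] a2_def[symmetric] by auto
  have c1: "f1 (Lam / (r + mu)) 0 < a1" using m1 a1p s1 by (simp add: divide_less_eq)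
  have eq: "sigma2 / a2 + k * r * Lam / (a2 * mu * (r + mu)) = (sigma2 + k * (r * Lam / (mu * (r + mu)))) / a2"
  proof -
    have "r + mu \<noteq> 0" "mu \<noteq> 0" "a2 \<noteq> 0" using a2p assms(2,3) by auto
    thus ?thesis by (simp add: add_divide_distrib mult.commute mult.left_commute)
  qed
  have c2: "f2 (Lam / (r + mu)) 0 + k * (r * Lam / (mu * (r + mu))) < a2"
    using m2 a2p s2 unfolding eq by (simp add: divide_less_eq)
  show ?thesis unfolding a1_def[symmetric] a2_def[symmetric]
    by (rule core[OF assms(1-4) a1p a2p assms(9,10) c1 c2])
qed

end
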